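(* In the virtually-$\mathbb{Z}$ setting described in the context, let $\Phi$ be a cellular automaton on $A^G$ with neighborhood $S$ and $\Delta=\max\{\mathrm{imp}(s):s\in S\}$. Let $x\in A^G$ be such that for every $k\in\mathbb{N}$ there exist finite sets $L_1\subseteq Br_-(V_{\{-k\}})$, $L_2\subseteq Br_+(V_{\{k\}})$ and sections $V_1\subseteq Br_-(V_{\{-k\}})$, $V_2\subseteq Br_+(V_{\{k\}})$ with $l(V_1)>\Delta$ and $l(V_2)>\Delta$, such that for $i=1,2$ the pattern $u_i=x|_{L_i}$ is $V_i$-blocking for $\Phi$. Then $x$ is an equicontinuity point of $\Phi$.
   Context: $G$ is a finitely generated group, $A$ a finite alphabet, $H\leq G$ a subgroup of finite index and $\varphi:H\to\mathbb{Z}$ a group isomorphism. $F\subseteq G$ is a finite set with $1_G\in F$ containing exactly one element of each right coset $Hg$, so every $g\in G$ decomposes uniquely as $g=zf$ with $z\in H$, $f\in F$. Define $p:G\to\mathbb{Z}$ by $p(zf)=\varphi(z)$. For $X\subseteq\mathbb{Z}$, $V_X=p^{-1}(X)$; $V_{\{k\}}$ is the $k$-th vertebra; $V_X$ is a section if $X=[a,b]$ is a finite integer interval, with length $l(V_{[a,b]})=b-a+1$, right arm $Br_+(V_{[a,b]})=V_{(b,\infty)}$ and left arm $Br_-(V_{[a,b]})=V_{(-\infty,a)}$ (so $Br_-(V_{\{-k\}})=V_{(-\infty,-k)}$, $Br_+(V_{\{k\}})=V_{(k,\infty)}$). For $s\in G$, $\mathrm{imp}(s)=\max\{|p(gs)-p(g)|:g\in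 V_{\{k\}}\}$, which is independent of $k$. A cellular automaton $\Phi$ with neighborhood $S\subseteq G$ finite and local map $\mu:A^S\to A$ is $\Phi(x)(g)=\mu(s\mapsto x(gs))$. For finite $V\subseteq G$, a pattern $u\in A^L$ ($L\subseteq G$ finite) is $V$-blocking for $\Phi$ if for all $x,y\in A^G$ with $x|_L=y|_L=u$ one has $\Phi^t(x)|_V=\Phi^t(y)|_V$ for all $t\in\mathbb{N}$. Metric: $G$ is given the generating set $F\cup\{\varphi^{-1}(1)\}$ together with inverses, with word metric $d$, and $A^G$ the Cantor metric $d^C(x,y)=2^{-k}$, $k=\min\{d(1_G,g):x(g)\neq y(g)\}$, with closed balls $B$. $x$ is an equicontinuity point of $\Phi$ if $\forall\epsilon>0\,\exists\delta>0\,\forall t\in\mathbb{N}$, $\Phi^t(B(x,\delta))\subseteq B(\Phi^t(x),\epsilon)$. *)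

theory Defs
  imports Complex_Main "HOL-Library.FuncSet"
begin

text \<open>The group G is a type of class group_add (not necessarily commutative),
written additively: gs corresponds to g + s, the identity is 0.\<close>

definition vz_setting :: "'g::group_add set \<Rightarrow> ('g \<Rightarrow> int) \<Rightarrow> 'g set \<Rightarrow> bool" where
  "vz_setting H \<phi> F \<longleftrightarrow>
     0 \<in> H \<and> (\<forall>a\<in>H. \<forall>b\<in>H. a + b \<in> H) \<and> (\<forall>a\<in>H. - a \<in> H) \<and>
     (\<forall>a\<in>H. \<forall>b\<in>H. \<phi> (a + b) = \<phi> a + \<phi> b) \<and> bij_betw \<phi> H UNIV \<and>
     finite F \<and> 0 \<in> F \<and> (\<forall>g. \<exists>!f. f \<in> F \<and> f \<in> (\<lambda>z. z + g) ` H)"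

definition proj :: "'g::group_add set \<Rightarrow> ('g \<Rightarrow> int) \<Rightarrow> 'g set \<Rightarrow> 'g \<Rightarrow> int" where
  "proj H \<phi> F g = \<phi> (THE z. z \<in> H \<and> (\<exists>f\<in>F. g = z + f))"

definition vset :: "'g::group_add set \<Rightarrow> ('g \<Rightarrow> int) \<Rightarrow> 'g set \<Rightarrow> int set \<Rightarrow> 'g set" where
  "vset H \<phi> F X = {g. proj H \<phi> F g \<in> X}"

text \<open>imp(s), computed on the 0-th vertebra (independent of k).\<close>
definition imp :: "'g::group_add set \<Rightarrow> ('g \<Rightarrow> int) \<Rightarrow> 'g set \<Rightarrow> 'g \<Rightarrow> int" where
  "imp H \<phi> F s = Max ((\<lambda>g. \<bar>proj H \<phi> F (g + s) - proj H \<phi> F g\<bar>) ` vset H \<phi> F {0})"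

definition Delta :: "'g::group_add set \<Rightarrow> ('g \<Rightarrow> int) \<Rightarrow> 'g set \<Rightarrow> 'g set \<Rightarrow> int" where
  "Delta H \<phi> F S = Max (insert 0 (imp H \<phi> F ` S))"

text \<open>Cellular automaton with neighbourhood S and local rule mu : A^S -> A
  (elements of A^S are represented as functions restricted to S).\<close>
definition ca :: "'g::group_add set \<Rightarrow> (('g \<Rightarrow> 'a) \<Rightarrow> 'a) \<Rightarrow> ('g \<Rightarrow> 'a) \<Rightarrow> 'g \<Rightarrow> 'a" where
  "ca S \<mu> x g = \<mu> (restrict (\<lambda>s. x (g + s)) S)"

definition blocking :: "(('g \<Rightarrow> 'a) \<Rightarrow> ('g \<Rightarrow> 'a)) \<Rightarrow> 'g set \<Rightarrow> ('g \<Rightarrow> 'a) \<Rightarrow> 'g set \<Rightarrow> bool" where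
  "blocking \<Phi> L u V \<longleftrightarrow>
     (\<forall>x y. (\<forall>g\<in>L. x g = u g) \<and> (\<forall>g\<in>L. y g = u g) \<longrightarrow>
        (\<forall>t::nat. \<forall>g\<in>V. (\<Phi> ^^ t) x g = (\<Phi> ^^ t) y g))"

definition gens :: "'g::group_add set \<Rightarrow> ('g \<Rightarrow> int) \<Rightarrow> 'g set \<Rightarrow> 'g set" where
  "gens H \<phi> F = (let T = F \<union> {inv_into H \<phi> 1} in T \<union> uminus ` T)"

definition wlen :: "'g::group_add set \<Rightarrow> 'g \<Rightarrow> nat" where
  "wlen Gs g = (LEAST n. \<exists>ws. length ws = n \<and> set ws \<subseteq> Gs \<and> sum_list ws = g)"

definition cdist :: "'g::group_add set \<Rightarrow> ('g \<Rightarrow> 'a) \<Rightarrow> ('g \<Rightarrow> 'a) \<Rightarrow> real" where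
  "cdist Gs x y = (if x = y then 0 else
      (1/2) ^ (LEAST k. \<exists>g. wlen Gs g = k \<and> x g \<noteq> y g))"

definition equicont_point :: "'g::group_add set \<Rightarrow> (('g \<Rightarrow> 'a) \<Rightarrow> ('g \<Rightarrow> 'a)) \<Rightarrow> ('g \<Rightarrow> 'a) \<Rightarrow> bool" where
  "equicont_point Gs \<Phi> x \<longleftrightarrow>
     (\<forall>\<epsilon>>0. \<exists>\<delta>>0. \<forall>t::nat. \<forall>y. cdist Gs x y \<le> \<delta> \<longrightarrow>
        cdist Gs ((\<Phi> ^^ t) x) ((\<Phi> ^^ t) y) \<le> \<epsilon>)"

end

theory Submission
  imports Defs
begin

locale vz =
  fixes H :: "'g::group_add set" and \<phi> :: "'g \<Rightarrow> int" and F :: "'g set"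
  assumes setting: "vz_setting H \<phi> F"
begin

abbreviation P where "P \<equiv> proj H \<phi> F"

lemma H0: "0 \<in> H" and Hadd: "a \<in> H \<Longrightarrow> b \<in> H \<Longrightarrow> a + b \<in> H"
  and Hneg: "a \<in> H \<Longrightarrow> - a \<in> H"
  and phiadd: "a \<in> H \<Longrightarrow> b \<in> H \<Longrightarrow> \<phi> (a + b) = \<phi> a + \<phi> b"
  and bij: "bij_betw \<phi> H UNIV" and Ffin: "finite F" and F0: "0 \<in> F"
  and Fcos: "\<exists>!f. f \<in> F \<and> f \<in> (\<lambda>z. z + g) ` H"
  using setting unfolding vz_setting_def by auto

lemma phi0: "\<phi> 0 = 0"
  using phiadd[OF H0 H0] by simp

lemma phi_inj: "a \<in> H \<Longrightarrow> b \<in> H \<Longrightarrow> \<phi> a = \<phi> b \<Longrightarrow> a = b"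
  using bij by (auto simp: bij_betw_def inj_on_def)

lemma decomp_ex: "\<exists>z f. z \<in> H \<and> f \<in> F \<and> g = z + f"
proof -
  obtain f where f: "f \<in> F" "f \<in> (\<lambda>z. z + g) ` H" using Fcos[of g] by blast
  then obtain z where z: "z \<in> H" "f = z + g" by blast
  then have "g = - z + f" by (simp add: add.assoc[symmetric])
  then show ?thesis using Hneg[OF z(1)] f(1) by blast
qed

lemma decomp_uniq:
  assumes "z1 \<in> H" "f1 \<in> F" "z2 \<in> H" "f2 \<in> F" "z1 + f1 = z2 + f2"
  shows "z1 = z2 \<and> f1 = f2"
proof -
  have e1: "f1 = (- z1 + z2) + f2"
  proof -
    have "- z1 + (z1 + f1) = - z1 + (z2 + f2)" using assms(5) by simp
    then show ?thesis by (simp add: add.assoc)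
  qed
  have "f1 \<in> (\<lambda>z. z + f2) ` H" using e1 Hadd[OF Hneg[OF assms(1)] assms(3)] by blast
  moreover have "f2 \<in> (\<lambda>z. z + f2) ` H" using H0 by force
  moreover obtain c where c: "\<forall>y. y \<in> F \<and> y \<in> (\<lambda>z. z + f2) ` H \<longrightarrow> y = c"
    using Fcos[of f2] by (elim ex1E) blast
  ultimately have "f1 = f2" using assms(2,4) by metis
  then show ?thesis using assms(5) by simp
qed

lemma proj_eq: "z \<in> H \<Longrightarrow> f \<in> F \<Longrightarrow> P (z + f) = \<phi> z"
proof -
  assume a: "z \<in> H" "f \<in> F"
  have "(THE z'. z' \<in> H \<and> (\<exists>f'\<in>F. z + f = z' + f')) = z"
  proof (rule the_equality)
    show "z \<in> H \<and> (\<exists>f'\<in>F. z + f = z + f')" using a by (intro conjI bexI[of _ f]) simp_all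
  next
    fix z' assume h: "z' \<in> H \<and> (\<exists>f'\<in>F. z + f = z' + f')"
    then obtain f' where f': "f' \<in> F" "z + f = z' + f'" by blast
    show "z' = z" using decomp_uniq[OF conjunct1[OF h] f'(1) a(1) a(2) f'(2)[symmetric]] by (rule conjunct1)
  qed
  then show ?thesis unfolding proj_def by simp
qed

lemma proj_surj: "P (inv_into H \<phi> n) = n"
proof -
  have "inv_into H \<phi> n \<in> H" using bij unfolding bij_betw_def by (auto intro: inv_into_into)
  moreover have "\<phi> (inv_into H \<phi> n) = n" using bij unfolding bij_betw_def by (auto intro: f_inv_into_f)
  ultimately show ?thesis using proj_eq[OF _ F0, of "inv_into H \<phi> n"] by simp
qed

lemma vset0_sub: "vset H \<phi> F {0} \<subseteq> F"
proof
  fix g assume "g \<in> vset H \<phi> F {0}"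
  then have p: "P g = 0" by (simp add: vset_def)
  obtain z f where zf: "z \<in> H" "f \<in> F" "g = z + f" using decomp_ex by blast
  then have "\<phi> z = \<phi> 0" using p proj_eq phi0 by simp
  then have "z = 0" using phi_inj zf H0 by blast
  then show "g \<in> F" using zf by simp
qed

lemma vset0_fin: "finite (vset H \<phi> F {0})"
  using vset0_sub Ffin finite_subset by blast

lemma shift: "\<bar>P (g + s) - P g\<bar> \<le> imp H \<phi> F s"
proof -
  obtain z f where zf: "z \<in> H" "f \<in> F" "g = z + f" using decomp_ex by blast
  obtain z' f' where zf': "z' \<in> H" "f' \<in> F" "f + s = z' + f'" using decomp_ex by blast
  have "g + s = (z + z') + f'" using zf zf' by (simp add: add.assoc)
  then have "P (g + s) - P g = \<phi> z'"
    using proj_eq zf zf' Hadd phiadd by simp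
  moreover have "P (f + s) - P f = \<phi> z'"
    using proj_eq[OF zf'(1,2)] zf'(3) proj_eq[OF H0 zf(2)] phi0 by simp
  moreover have "f \<in> vset H \<phi> F {0}"
    using proj_eq[OF H0 zf(2)] phi0 by (simp add: vset_def)
  ultimately have "\<bar>P (g + s) - P g\<bar> \<in> (\<lambda>g. \<bar>P (g + s) - P g\<bar>) ` vset H \<phi> F {0}"
    by (metis (no_types, lifting) image_eqI)
  then show ?thesis unfolding imp_def using vset0_fin by (intro Max_ge) auto
qed

lemma imp_nonneg: "imp H \<phi> F s \<ge> 0"
  using shift[of 0 s] by linarith

lemma vset_fin: "finite (vset H \<phi> F {a..b})"
proof -
  have "vset H \<phi> F {a..b} \<subseteq> (\<lambda>(z, f). z + f) ` ((inv_into H \<phi> ` {a..b}) \<times> F)"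
  proof
    fix g assume "g \<in> vset H \<phi> F {a..b}"
    then have p: "P g \<in> {a..b}" by (simp add: vset_def)
    obtain z f where zf: "z \<in> H" "f \<in> F" "g = z + f" using decomp_ex by blast
    have "z = inv_into H \<phi> (\<phi> z)" using zf(1) bij by (simp add: bij_betw_def)
    moreover have "\<phi> z \<in> {a..b}" using p zf proj_eq by simp
    ultimately show "g \<in> (\<lambda>(z, f). z + f) ` ((inv_into H \<phi> ` {a..b}) \<times> F)"
      using zf by force
  qed
  then show ?thesis using Ffin finite_subset by blast
qed

definition e where "e = inv_into H \<phi> 1"

lemma e_H: "e \<in> H" and phi_e: "\<phi> e = 1"
  using bij unfolding e_def bij_betw_def by (auto intro: inv_into_into f_inv_into_f)

lemma rep_pos: "sum_list (replicate n e) \<in> H \<and> \<phi> (sum_list (replicate n e)) = int n"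
  by (induction n) (auto simp: H0 phi0 e_H phi_e Hadd phiadd)

lemma phi_neg_e: "\<phi> (- e) = -1"
  using phiadd[OF Hneg[OF e_H] e_H] phi0 phi_e by simp

lemma rep_neg: "sum_list (replicate n (- e)) \<in> H \<and> \<phi> (sum_list (replicate n (- e))) = - int n"
  by (induction n) (auto simp: H0 phi0 e_H Hneg phi_neg_e Hadd phiadd)

abbreviation Gs where "Gs \<equiv> gens H \<phi> F"

lemma Gs_fin: "finite Gs"
  unfolding gens_def Let_def using Ffin by simp

lemma e_Gs: "e \<in> Gs" "- e \<in> Gs" unfolding gens_def e_def Let_def by auto

lemma F_Gs: "F \<subseteq> Gs" unfolding gens_def Let_def by auto

lemma generate: "\<exists>ws. set ws \<subseteq> Gs \<and> sum_list ws = g"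
proof -
  obtain z f where zf: "z \<in> H" "f \<in> F" "g = z + f" using decomp_ex by blast
  have "\<exists>ws. set ws \<subseteq> Gs \<and> sum_list ws = z"
  proof (cases "\<phi> z \<ge> 0")
    case True
    let ?w = "sum_list (replicate (nat (\<phi> z)) e)"
    have "?w = z" using rep_pos[of "nat (\<phi> z)"] True phi_inj zf(1) by simp
    moreover have "set (replicate (nat (\<phi> z)) e) \<subseteq> Gs" using e_Gs by auto
    ultimately show ?thesis by blast
  next
    case False
    let ?w = "sum_list (replicate (nat (- \<phi> z)) (- e))"
    have "?w = z" using rep_neg[of "nat (- \<phi> z)"] False phi_inj zf(1) by simp
    moreover have "set (replicate (nat (- \<phi> z)) (- e)) \<subseteq> Gs" using e_Gs by auto
    ultimately show ?thesis by blast
  qed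
  then obtain ws where "set ws \<subseteq> Gs" "sum_list ws = z" by blast
  then show ?thesis using zf F_Gs
    by (intro exI[of _ "ws @ [f]"]) auto
qed

definition C where "C = Max (imp H \<phi> F ` Gs)"

lemma C_bound: "s \<in> Gs \<Longrightarrow> imp H \<phi> F s \<le> C"
  unfolding C_def using Gs_fin by simp

lemma word_bound: "set ws \<subseteq> Gs \<Longrightarrow> \<bar>P (sum_list ws)\<bar> \<le> C * int (length ws)"
proof (induction ws rule: rev_induct)
  case Nil
  then show ?case using proj_eq[OF H0 F0] phi0 by simp
next
  case (snoc w ws)
  have "\<bar>P (sum_list ws + w) - P (sum_list ws)\<bar> \<le> C"
    using shift[of "sum_list ws" w] C_bound[of w] snoc.prems by simp
  then show ?case using snoc by (simp add: algebra_simps)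
qed

lemma wlen_bound: "\<bar>P g\<bar> \<le> C * int (wlen Gs g)"
proof -
  obtain ws where ws: "set ws \<subseteq> Gs" "sum_list ws = g" using generate by blast
  have "\<exists>ws. length ws = wlen Gs g \<and> set ws \<subseteq> Gs \<and> sum_list ws = g"
    unfolding wlen_def by (rule LeastI[of _ "length ws"]) (use ws in blast)
  then obtain ws' where "length ws' = wlen Gs g" "set ws' \<subseteq> Gs" "sum_list ws' = g" by blast
  then show ?thesis using word_bound[of ws'] by simp
qed

lemma C_nonneg: "C \<ge> 0"
  using C_bound[OF e_Gs(1)] imp_nonneg[of e] by simp

end

lemma blk:
  assumes "blocking \<Phi> L u V" "\<forall>g\<in>L. x g = u g" "\<forall>g\<in>L. y g = u g" "g \<in> V"
  shows "(\<Phi> ^^ t) x g = (\<Phi> ^^ t) y g"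
  using assms unfolding blocking_def by blast

lemma cdist_small:
  assumes "cdist Gs x y \<le> (1/2) ^ R" "wlen Gs g < R"
  shows "x g = y g"
proof (rule ccontr)
  assume ne: "x g \<noteq> y g"
  then have "x \<noteq> y" by auto
  let ?k = "LEAST k. \<exists>g. wlen Gs g = k \<and> x g \<noteq> y g"
  have "(1/2::real) ^ ?k \<le> (1/2) ^ R" using assms(1) \<open>x \<noteq> y\<close> by (simp add: cdist_def)
  then have "R \<le> ?k" by (simp add: power_decreasing_iff)
  moreover have "?k \<le> wlen Gs g" by (rule Least_le) (use ne in auto)
  ultimately show False using assms(2) by simp
qed

lemma cdist_le:
  assumes "\<And>g. wlen Gs g < N \<Longrightarrow> u g = v g"
  shows "cdist Gs u v \<le> (1/2) ^ N"
proof (cases "u = v")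
  case True then show ?thesis by (simp add: cdist_def)
next
  case False
  then obtain g0 where g0: "u g0 \<noteq> v g0" by auto
  let ?k = "LEAST k. \<exists>g. wlen Gs g = k \<and> u g \<noteq> v g"
  have "\<exists>g. wlen Gs g = ?k \<and> u g \<noteq> v g" by (rule LeastI[of _ "wlen Gs g0"]) (use g0 in auto)
  then obtain g1 where g1: "wlen Gs g1 = ?k" "u g1 \<noteq> v g1" by blast
  then have "\<not> wlen Gs g1 < N" using assms by blast
  then have "N \<le> ?k" using g1 by simp
  then have "(1/2::real) ^ ?k \<le> (1/2) ^ N" by (simp add: power_decreasing_iff)
  then show ?thesis using False by (simp add: cdist_def)
qed


theorem lemma5:
  fixes H :: "'g::group_add set" and \<phi> :: "'g \<Rightarrow> int" and F :: "'g set"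
    and S :: "'g set" and \<mu> :: "('g \<Rightarrow> 'a::finite) \<Rightarrow> 'a" and x :: "'g \<Rightarrow> 'a"
  assumes setting: "vz_setting H \<phi> F"
    and S_fin: "finite S"
    and hyp: "\<forall>k::nat. \<exists>L1 L2 a1 b1 a2 b2.
        finite L1 \<and> L1 \<subseteq> vset H \<phi> F {..< - int k} \<and>
        finite L2 \<and> L2 \<subseteq> vset H \<phi> F {int k <..} \<and>
        vset H \<phi> F {a1..b1} \<subseteq> vset H \<phi> F {..< - int k} \<and>
        vset H \<phi> F {a2..b2} \<subseteq> vset H \<phi> F {int k <..} \<and>
        b1 - a1 + 1 > Delta H \<phi> F S \<and> b2 - a2 + 1 > Delta H \<phi> F S \<and>
        blocking (ca S \<mu>) L1 (restrict x L1) (vset H \<phi> F {a1..b1}) \<and>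
        blocking (ca S \<mu>) L2 (restrict x L2) (vset H \<phi> F {a2..b2})"
  shows "equicont_point (gens H \<phi> F) (ca S \<mu>) x"
proof -
  interpret vz H \<phi> F by (rule vz.intro[OF setting])
  let ?V = "vset H \<phi> F"
  let ?\<Phi> = "ca S \<mu>"
  let ?D = "Delta H \<phi> F S"
  have D0: "?D \<ge> 0" unfolding Delta_def using S_fin by simp
  have impD: "s \<in> S \<Longrightarrow> imp H \<phi> F s \<le> ?D" for s
    unfolding Delta_def using S_fin by simp
  show ?thesis unfolding equicont_point_def
  proof (intro allI impI)
    fix \<epsilon> :: real assume "\<epsilon> > 0"
    obtain N :: nat where N: "(1/2::real) ^ N < \<epsilon>" using real_arch_pow_inv[OF \<open>\<epsilon> > 0\<close>, of "1/2"] by auto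
    define kk where "kk = nat (C * int N)"
    obtain L1 L2 a1 b1 a2 b2 where
      L1: "finite L1" and L2: "finite L2" and
      V1: "?V {a1..b1} \<subseteq> ?V {..< - int kk}" and
      V2: "?V {a2..b2} \<subseteq> ?V {int kk <..}" and
      l1: "b1 - a1 + 1 > ?D" and l2: "b2 - a2 + 1 > ?D" and
      B1: "blocking ?\<Phi> L1 (restrict x L1) (?V {a1..b1})" and
      B2: "blocking ?\<Phi> L2 (restrict x L2) (?V {a2..b2})"
      using hyp[rule_format, of kk] by (elim exE conjE) (rule that; assumption)
    have "inv_into H \<phi> b1 \<in> ?V {a1..b1}" using l1 D0 proj_surj by (simp add: vset_def)
    then have "inv_into H \<phi> b1 \<in> ?V {..< - int kk}" using V1 by (rule subsetD[rotated])
    then have b1k: "b1 < - int kk" using proj_surj by (simp add: vset_def)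
    have "inv_into H \<phi> a2 \<in> ?V {a2..b2}" using l2 D0 proj_surj by (simp add: vset_def)
    then have "inv_into H \<phi> a2 \<in> ?V {int kk <..}" using V2 by (rule subsetD[rotated])
    then have a2k: "a2 > int kk" using proj_surj by (simp add: vset_def)
    define M where "M = L1 \<union> L2 \<union> ?V {a1..b2}"
    have Mfin: "finite M" unfolding M_def using L1 L2 vset_fin by simp
    define R where "R = Suc (Max (insert 0 (wlen Gs ` M)))"
    have MR: "g \<in> M \<Longrightarrow> wlen Gs g < R" for g
      unfolding R_def using Mfin by (simp add: le_imp_less_Suc)
    show "\<exists>\<delta>>0. \<forall>t y. cdist Gs x y \<le> \<delta> \<longrightarrow> cdist Gs ((?\<Phi> ^^ t) x) ((?\<Phi> ^^ t) y) \<le> \<epsilon>"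
    proof (intro exI[of _ "(1/2::real) ^ R"] conjI allI impI)
      show "(0::real) < (1/2) ^ R" by simp
      fix t :: nat and y assume cd: "cdist Gs x y \<le> (1/2) ^ R"
      have xy: "g \<in> M \<Longrightarrow> x g = y g" for g using cdist_small[OF cd MR] by blast
      have inv: "\<forall>g \<in> ?V {a1..b2}. (?\<Phi> ^^ n) x g = (?\<Phi> ^^ n) y g" for n
      proof (induction n)
        case 0
        then show ?case using xy unfolding M_def by simp
      next
        case (Suc n)
        show ?case
        proof
          fix g assume g: "g \<in> ?V {a1..b2}"
          have pg: "a1 \<le> P g" "P g \<le> b2" using g by (auto simp: vset_def)
          consider "P g \<in> {a1..b1}" | "P g \<in> {a2..b2}" | "b1 < P g" "P g < a2"
            using pg by fastforce
          then show "(?\<Phi> ^^ Suc n) x g = (?\<Phi> ^^ Suc n) y g"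
          proof cases
            case 1
            have "g \<in> ?V {a1..b1}" using 1 by (simp add: vset_def)
            moreover have "\<forall>g\<in>L1. y g = restrict x L1 g" using xy unfolding M_def by simp
            ultimately show ?thesis using blk[OF B1, of x y g "Suc n"] by simp
          next
            case 2
            have "g \<in> ?V {a2..b2}" using 2 by (simp add: vset_def)
            moreover have "\<forall>g\<in>L2. y g = restrict x L2 g" using xy unfolding M_def by simp
            ultimately show ?thesis using blk[OF B2, of x y g "Suc n"] by simp
          next
            case 3
            have "\<forall>s\<in>S. (?\<Phi> ^^ n) x (g + s) = (?\<Phi> ^^ n) y (g + s)"
            proof
              fix s assume "s \<in> S"
              have "\<bar>P (g + s) - P g\<bar> \<le> ?D" using shift[of g s] impD[OF \<open>s \<in> S\<close>] by simp
              then have "a1 \<le> P (g + s) \<and> P (g + s) \<le> b2" using 3 l1 l2 by arith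
              then have "g + s \<in> ?V {a1..b2}" by (simp add: vset_def)
              then show "(?\<Phi> ^^ n) x (g + s) = (?\<Phi> ^^ n) y (g + s)" using Suc.IH by blast
            qed
            then have "restrict (\<lambda>s. (?\<Phi> ^^ n) x (g + s)) S = restrict (\<lambda>s. (?\<Phi> ^^ n) y (g + s)) S"
              by (intro restrict_ext) simp
            then show ?thesis by (simp add: ca_def)
          qed
        qed
      qed
      have "cdist Gs ((?\<Phi> ^^ t) x) ((?\<Phi> ^^ t) y) \<le> (1/2) ^ N"
      proof (rule cdist_le)
        fix g assume "wlen Gs g < N"
        have "C * int (wlen Gs g) \<le> C * int N"
          using \<open>wlen Gs g < N\<close> C_nonneg by (intro mult_left_mono) auto
        moreover have "int kk = C * int N" unfolding kk_def using C_nonneg by simp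
        ultimately have "\<bar>P g\<bar> \<le> int kk" using wlen_bound[of g] by linarith
        then have "a1 \<le> P g \<and> P g \<le> b2" using b1k a2k l1 l2 D0 by arith
        then have "g \<in> ?V {a1..b2}" by (simp add: vset_def)
        then show "(?\<Phi> ^^ t) x g = (?\<Phi> ^^ t) y g" using inv by blast
      qed
      then show "cdist Gs ((?\<Phi> ^^ t) x) ((?\<Phi> ^^ t) y) \<le> \<epsilon>" using N by simp
    qed
  qed
qed

end
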